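(* Let $G=(V,E,\partial)$ be a graph and let $\mathcal G=\bigoplus_{v\in V}\mathcal G_v$ be a vertex space associated to $G$. Then there exist a graph $\tilde G=(\tilde V,E,\tilde\partial)$ (with the same edge set $E$) and a surjective graph morphism $\pi\colon \tilde G\to G$ which is the identity on $E$, together with subspaces $\tilde{\mathcal G}_{\tilde v}\subseteq \mathbb C^{\tilde E_{\tilde v}}$ for $\tilde v\in\tilde V$ (where $\tilde E_{\tilde v}$ is the set of edges adjacent to $\tilde v$ in $\tilde G$; such edges are adjacent to $\pi(\tilde v)$ in $G$, and $\tilde{\mathcal G}_{\tilde v}$ is regarded as a subspace of $\mathbb C^{E_{\pi(\tilde v)}}$ by extension by zero), such that $$\mathcal G=\bigoplus_{\tilde v\in\tilde V}\tilde{\mathcal G}_{\tilde v}\qquad\text{and}\qquad \mathcal G_v=\bigoplus_{\tilde v\in\pi^{-1}\{v\}}\tilde{\mathcal G}_{\tilde v}\quad\text{for all }v\in V,$$ and each $\tilde{\mathcal G}_{\tilde v}$ is irreducible.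
   Context: A graph $G=(V,E,\partial)$ consists of a countable vertex set $V$, a countable edge set $E$, and a map $\partial\colon E\to V\times V$, $e\mapsto(\partial_-e,\partial_+e)$ (initial and terminal vertex). For $v\in V$ let $E_v^\pm=\{e\in E:\partial_\pm e=v\}$ and $E_v=E_v^+\sqcup E_v^-$ (disjoint union, so a self-loop appears twice); $\deg v=|E_v|$ is assumed finite and $\ge1$. The maximal vertex space at $v$ is $\mathbb C^{E_v}$; a vertex space at $v$ is a linear subspace $\mathcal G_v\subseteq\mathbb C^{E_v}$, and a vertex space of $G$ is $\mathcal G=\bigoplus_{v\in V}\mathcal G_v$. For $E_0\subseteq E_v$ set $\mathcal G_v|_{E_0}=\{F\in\mathcal G_v: F_e=0\text{ for all }e\in E_v\setminus E_0\}$. A vertex space $\mathcal G_v$ is irreducible if for every decomposition $E_v=E_{1}\sqcup E_{2}$ with $\mathcal G_v=\mathcal G_v|_{E_1}\oplus\mathcal G_v|_{E_2}$ one has $E_1=\emptyset$ or $E_2=\emptyset$ (the same definition applies to vertices of $\tilde G$). A graph morphism $\pi\colon\tilde G\to G$ which is the identity on edges is a map $\pi\colon\tilde V\to V$ with $\partial_\pm e=\pi(\tilde\partial_\pm e)$ for all $e\in E$; it is surjective if $\pi$ is onto $V$. *)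

theory Defs
  imports Complex_Main "HOL-Library.Countable_Set"
begin

text \<open>Half-edges: a pair (e, b) with b = True standing for the terminal end
  (e in E_v^+) and b = False for the initial end (e in E_v^-).  Thus the
  disjoint union E_v = E_v^+ + E_v^- is the set of half-edges at v, and a
  self-loop contributes two half-edges.\<close>

definition endpt :: "('e \<Rightarrow> 'v \<times> 'v) \<Rightarrow> bool \<Rightarrow> 'e \<Rightarrow> 'v" where
  "endpt bd b e = (if b then snd (bd e) else fst (bd e))"

definition half_edges :: "'e set \<Rightarrow> ('e \<Rightarrow> 'v \<times> 'v) \<Rightarrow> 'v \<Rightarrow> ('e \<times> bool) set" where
  "half_edges E bd v = {(e, b). e \<in> E \<and> endpt bd b e = v}"

definition is_graph :: "'v set \<Rightarrow> 'e set \<Rightarrow> ('e \<Rightarrow> 'v \<times> 'v) \<Rightarrow> bool" where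
  "is_graph V E bd \<longleftrightarrow> countable V \<and> countable E
     \<and> (\<forall>e\<in>E. fst (bd e) \<in> V \<and> snd (bd e) \<in> V)
     \<and> (\<forall>v\<in>V. finite (half_edges E bd v) \<and> half_edges E bd v \<noteq> {})"

text \<open>C^A, realised inside the functions on all half-edges by extension by zero.\<close>
definition supported_on :: "'h set \<Rightarrow> ('h \<Rightarrow> complex) set" where
  "supported_on A = {F. \<forall>h. h \<notin> A \<longrightarrow> F h = 0}"

definition complex_subspace :: "('h \<Rightarrow> complex) set \<Rightarrow> bool" where
  "complex_subspace S \<longleftrightarrow> (\<lambda>_. 0) \<in> S
     \<and> (\<forall>F\<in>S. \<forall>G\<in>S. (\<lambda>h. F h + G h) \<in> S)
     \<and> (\<forall>c. \<forall>F\<in>S. (\<lambda>h. c * F h) \<in> S)"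

definition is_vertex_space :: "('h set) \<Rightarrow> ('h \<Rightarrow> complex) set \<Rightarrow> bool" where
  "is_vertex_space A S \<longleftrightarrow> complex_subspace S \<and> S \<subseteq> supported_on A"

definition subspace_sum :: "'i set \<Rightarrow> ('i \<Rightarrow> ('h \<Rightarrow> complex) set) \<Rightarrow> ('h \<Rightarrow> complex) set" where
  "subspace_sum I S = {x. \<exists>J f. finite J \<and> J \<subseteq> I \<and> (\<forall>i\<in>J. f i \<in> S i)
                            \<and> x = (\<lambda>h. \<Sum>i\<in>J. f i h)}"

definition is_direct_sum :: "('h \<Rightarrow> complex) set \<Rightarrow> 'i set \<Rightarrow> ('i \<Rightarrow> ('h \<Rightarrow> complex) set) \<Rightarrow> bool" where
  "is_direct_sum X I S \<longleftrightarrow> X = subspace_sum I S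
     \<and> (\<forall>J f. finite J \<and> J \<subseteq> I \<and> (\<forall>i\<in>J. f i \<in> S i) \<and> (\<lambda>h. \<Sum>i\<in>J. f i h) = (\<lambda>_. 0)
             \<longrightarrow> (\<forall>i\<in>J. f i = (\<lambda>_. 0)))"

definition restr_space :: "('h \<Rightarrow> complex) set \<Rightarrow> 'h set \<Rightarrow> ('h \<Rightarrow> complex) set" where
  "restr_space S E0 = {F\<in>S. \<forall>h. h \<notin> E0 \<longrightarrow> F h = 0}"

definition irreducible_vs :: "'h set \<Rightarrow> ('h \<Rightarrow> complex) set \<Rightarrow> bool" where
  "irreducible_vs A S \<longleftrightarrow> (\<forall>E1 E2. A = E1 \<union> E2 \<and> E1 \<inter> E2 = {}
      \<and> is_direct_sum S (UNIV :: bool set) (\<lambda>b. if b then restr_space S E1 else restr_space S E2)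
      \<longrightarrow> E1 = {} \<or> E2 = {})"

end

theory Submission
  imports Defs
begin


definition splits :: "('h \<Rightarrow> complex) set \<Rightarrow> 'h set \<Rightarrow> bool" where
  "splits S X \<longleftrightarrow> (\<forall>F\<in>S. (\<lambda>k. if k \<in> X then F k else 0) \<in> S)"

lemma cs_add: "complex_subspace S \<Longrightarrow> F \<in> S \<Longrightarrow> G \<in> S \<Longrightarrow> (\<lambda>h. F h + G h) \<in> S"
  unfolding complex_subspace_def by blast
lemma cs_smult: "complex_subspace S \<Longrightarrow> F \<in> S \<Longrightarrow> (\<lambda>h. c * F h) \<in> S"
  unfolding complex_subspace_def by blast
lemma cs_zero: "complex_subspace S \<Longrightarrow> (\<lambda>_. 0) \<in> S"
  unfolding complex_subspace_def by blast

lemma sub_sum: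
  assumes "complex_subspace S" "finite J" "\<forall>i\<in>J. f i \<in> S"
  shows "(\<lambda>h. \<Sum>i\<in>J. f i h) \<in> S"
  using assms(2,3)
proof (induction J rule: finite_induct)
  case empty then show ?case using assms(1) by (simp add: complex_subspace_def)
next
  case (insert x F)
  have fx: "f x \<in> S" and IH: "(\<lambda>h. \<Sum>i\<in>F. f i h) \<in> S" using insert by auto
  have add: "\<forall>F\<in>S. \<forall>G\<in>S. (\<lambda>h. F h + G h) \<in> S" using assms(1) unfolding complex_subspace_def by blast
  have "(\<lambda>h. f x h + (\<Sum>i\<in>F. f i h)) \<in> S"
    using add[rule_format, OF fx IH] by simp
  then show ?case using insert by simp
qed

lemma subspace_sum_subspace:
  assumes "\<forall>i\<in>I. complex_subspace (S i)"
  shows "complex_subspace (subspace_sum I S)"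
  unfolding complex_subspace_def
proof (intro conjI ballI allI)
  show "(\<lambda>_. 0) \<in> subspace_sum I S"
    unfolding subspace_sum_def by (rule CollectI, rule exI[of _ "{}"]) auto
next
  fix F G assume F: "F \<in> subspace_sum I S" and G: "G \<in> subspace_sum I S"
  from F obtain J1 f1 where J1: "finite J1" "J1 \<subseteq> I" "\<forall>i\<in>J1. f1 i \<in> S i" "F = (\<lambda>h. \<Sum>i\<in>J1. f1 i h)"
    unfolding subspace_sum_def by blast
  from G obtain J2 f2 where J2: "finite J2" "J2 \<subseteq> I" "\<forall>i\<in>J2. f2 i \<in> S i" "G = (\<lambda>h. \<Sum>i\<in>J2. f2 i h)"
    unfolding subspace_sum_def by blast
  define g1 where "g1 i = (if i \<in> J1 then f1 i else (\<lambda>_. 0))" for i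
  define g2 where "g2 i = (if i \<in> J2 then f2 i else (\<lambda>_. 0))" for i
  define J where "J = J1 \<union> J2"
  have g1S: "\<forall>i\<in>J. g1 i \<in> S i" using J1 assms J1(2) J2(2)
    unfolding g1_def J_def complex_subspace_def by auto
  have g2S: "\<forall>i\<in>J. g2 i \<in> S i" using J2 assms J1(2) J2(2)
    unfolding g2_def J_def complex_subspace_def by auto
  have mem: "\<forall>i\<in>J. (\<lambda>h. g1 i h + g2 i h) \<in> S i"
    using g1S g2S assms J1(2) J2(2) unfolding J_def complex_subspace_def by blast
  have s1: "(\<Sum>i\<in>J. g1 i h) = (\<Sum>i\<in>J1. f1 i h)" for h
  proof -
    have "(\<Sum>i\<in>J. g1 i h) = (\<Sum>i\<in>J. if i \<in> J1 then f1 i h else 0)"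
      by (rule sum.cong) (auto simp: g1_def)
    also have "\<dots> = (\<Sum>i\<in>J \<inter> J1. f1 i h)"
      using sum.inter_restrict[of J "\<lambda>i. f1 i h" J1] J1(1) J2(1) by (simp add: J_def)
    also have "J \<inter> J1 = J1" by (auto simp: J_def)
    finally show ?thesis .
  qed
  have s2: "(\<Sum>i\<in>J. g2 i h) = (\<Sum>i\<in>J2. f2 i h)" for h
  proof -
    have "(\<Sum>i\<in>J. g2 i h) = (\<Sum>i\<in>J. if i \<in> J2 then f2 i h else 0)"
      by (rule sum.cong) (auto simp: g2_def)
    also have "\<dots> = (\<Sum>i\<in>J \<inter> J2. f2 i h)"
      using sum.inter_restrict[of J "\<lambda>i. f2 i h" J2] J1(1) J2(1) by (simp add: J_def)
    also have "J \<inter> J2 = J2" by (auto simp: J_def)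
    finally show ?thesis .
  qed
  have "(\<lambda>h. F h + G h) = (\<lambda>h. \<Sum>i\<in>J. (\<lambda>h. g1 i h + g2 i h) h)"
    by (simp add: sum.distrib s1 s2 J1(4) J2(4))
  then show "(\<lambda>h. F h + G h) \<in> subspace_sum I S"
    unfolding subspace_sum_def using mem J1 J2
    by (intro CollectI exI[of _ J] exI[of _ "\<lambda>i h. g1 i h + g2 i h"]) (auto simp: J_def)
next
  fix c F assume F: "F \<in> subspace_sum I S"
  from F obtain J1 f1 where J1: "finite J1" "J1 \<subseteq> I" "\<forall>i\<in>J1. f1 i \<in> S i" "F = (\<lambda>h. \<Sum>i\<in>J1. f1 i h)"
    unfolding subspace_sum_def by blast
  have mem: "\<forall>i\<in>J1. (\<lambda>h. c * f1 i h) \<in> S i"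
    using J1 assms unfolding complex_subspace_def by blast
  have "(\<lambda>h. c * F h) = (\<lambda>h. \<Sum>i\<in>J1. (\<lambda>h. c * f1 i h) h)"
    by (simp add: J1(4) sum_distrib_left)
  then show "(\<lambda>h. c * F h) \<in> subspace_sum I S"
    unfolding subspace_sum_def using mem J1
    by (intro CollectI exI[of _ J1] exI[of _ "\<lambda>i h. c * f1 i h"]) auto
qed

lemma subspace_sum_mono: "I \<subseteq> I' \<Longrightarrow> subspace_sum I S \<subseteq> subspace_sum I' S"
  unfolding subspace_sum_def by blast

lemma subspace_sum_single: "i \<in> I \<Longrightarrow> x \<in> S i \<Longrightarrow> x \<in> subspace_sum I S"
  unfolding subspace_sum_def
  by (rule CollectI, rule exI[of _ "{i}"], rule exI[of _ "\<lambda>_. x"]) auto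

lemma restr_subspace:
  "complex_subspace S \<Longrightarrow> complex_subspace (restr_space S X)"
  unfolding complex_subspace_def restr_space_def by auto

lemma indep:
  assumes "finite J" "\<forall>i\<in>J. \<forall>k. f i k \<noteq> 0 \<longrightarrow> P i k"
    "\<forall>i j k. P i k \<and> P j k \<longrightarrow> i = j" "(\<lambda>k. \<Sum>i\<in>J. f i k) = (\<lambda>_. 0)"
  shows "\<forall>i\<in>J. f i = (\<lambda>_. 0)"
proof (intro ballI ext, rule ccontr)
  fix i k assume i: "i \<in> J" and nz: "f i k \<noteq> 0"
  have "(\<Sum>j\<in>J. f j k) = f i k + (\<Sum>j\<in>J - {i}. f j k)"
    using assms(1) i by (simp add: sum.remove)
  also have "(\<Sum>j\<in>J - {i}. f j k) = 0"
  proof (rule sum.neutral, rule ballI, rule ccontr)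
    fix j assume j: "j \<in> J - {i}" "f j k \<noteq> 0"
    then have "P j k" "P i k" using assms(2) i nz by auto
    then show False using assms(3) j by blast
  qed
  finally have "(\<Sum>j\<in>J. f j k) = f i k" by simp
  moreover have "(\<Sum>j\<in>J. f j k) = 0" using fun_cong[OF assms(4), of k] by simp
  ultimately show False using nz by simp
qed

lemma splits_Int: "splits S X \<Longrightarrow> splits S Y \<Longrightarrow> splits S (X \<inter> Y)"
  unfolding splits_def
proof (intro ballI)
  fix F assume X: "\<forall>F\<in>S. (\<lambda>k. if k \<in> X then F k else 0) \<in> S"
    and Y: "\<forall>F\<in>S. (\<lambda>k. if k \<in> Y then F k else 0) \<in> S" and F: "F \<in> S"
  have YF: "(\<lambda>k. if k \<in> Y then F k else 0) \<in> S" using Y F by blast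
  have "(\<lambda>k. if k \<in> X then (if k \<in> Y then F k else 0) else 0) \<in> S" using bspec[OF X YF] by simp
  moreover have "(\<lambda>k. if k \<in> X then (if k \<in> Y then F k else 0) else 0) = (\<lambda>k. if k \<in> X \<inter> Y then F k else 0)"
    by auto
  ultimately show "(\<lambda>k. if k \<in> X \<inter> Y then F k else 0) \<in> S" by simp
qed

lemma splits_Inter: "finite XX \<Longrightarrow> XX \<noteq> {} \<Longrightarrow> \<forall>X\<in>XX. splits S X \<Longrightarrow> splits S (\<Inter>XX)"
proof (induction XX rule: finite_ne_induct)
  case (singleton x) then show ?case by simp
next
  case (insert x F)
  then have "splits S x" "splits S (\<Inter>F)" by auto
  then have "splits S (x \<inter> \<Inter>F)" by (rule splits_Int)
  then show ?case by simp
qed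

lemma splits_all: "S \<subseteq> supported_on A \<Longrightarrow> splits S A"
  unfolding splits_def supported_on_def
proof (intro ballI)
  fix F assume "S \<subseteq> {F. \<forall>h. h \<notin> A \<longrightarrow> F h = 0}" "F \<in> S"
  then have "(\<lambda>k. if k \<in> A then F k else 0) = F" by (auto intro!: ext)
  then show "(\<lambda>k. if k \<in> A then F k else 0) \<in> S" using \<open>F \<in> S\<close> by simp
qed

lemma splits_diff:
  assumes "complex_subspace S" "S \<subseteq> supported_on A" "splits S X"
  shows "splits S (A - X)"
  unfolding splits_def
proof (intro ballI)
  fix F assume F: "F \<in> S"
  have a: "(\<lambda>k. if k \<in> X then F k else 0) \<in> S" using assms(3) F unfolding splits_def by blast
  then have b: "(\<lambda>k. (-1) * (if k \<in> X then F k else 0)) \<in> S"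
    by (rule cs_smult[OF assms(1)])
  have c: "(\<lambda>k. F k + (-1) * (if k \<in> X then F k else 0)) \<in> S"
    by (rule cs_add[OF assms(1) F b])
  have "\<forall>k. k \<notin> A \<longrightarrow> F k = 0" using assms(2) F unfolding supported_on_def by blast
  then have "(\<lambda>k. F k + (-1) * (if k \<in> X then F k else 0)) = (\<lambda>k. if k \<in> A - X then F k else 0)"
    by (auto intro!: ext)
  then show "(\<lambda>k. if k \<in> A - X then F k else 0) \<in> S" using c by simp
qed



locale LS =
  fixes V :: "'v set" and E :: "'e set" and bd :: "'e \<Rightarrow> 'v \<times> 'v"
    and Gv :: "'v \<Rightarrow> ('e \<times> bool \<Rightarrow> complex) set"
  assumes G: "is_graph V E bd"
    and VS: "\<forall>v\<in>V. is_vertex_space (half_edges E bd v) (Gv v)"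
begin

definition H :: "('e \<times> bool) set" where "H = E \<times> UNIV"
definition vt :: "'e \<times> bool \<Rightarrow> 'v" where "vt h = endpt bd (snd h) (fst h)"
definition fam where "fam h = {X. X \<subseteq> half_edges E bd (vt h) \<and> splits (Gv (vt h)) X \<and> h \<in> X}"
definition blk where "blk h = \<Inter>(fam h)"
definition rep where "rep h = (SOME x. x \<in> blk h)"
definition node where "node h = to_nat_on H (rep h)"
definition bdt where "bdt e = (node (e, False), node (e, True))"
definition Vt where "Vt = node ` H"
definition pi where "pi n = vt (from_nat_into H n)"
definition Gt where "Gt w = restr_space (Gv (pi w)) (half_edges E bdt w)"

lemma H_count: "countable H"
  using G unfolding H_def is_graph_def by auto

lemma vtV: "h \<in> H \<Longrightarrow> vt h \<in> V"
  using G unfolding H_def is_graph_def vt_def endpt_def by (cases h) auto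

lemma inA: "h \<in> H \<Longrightarrow> h \<in> half_edges E bd (vt h)"
  unfolding H_def half_edges_def vt_def by (cases h) auto

lemma A_H: "h \<in> half_edges E bd v \<Longrightarrow> h \<in> H \<and> vt h = v"
  unfolding H_def half_edges_def vt_def by (cases h) auto

lemma finA: "v \<in> V \<Longrightarrow> finite (half_edges E bd v)"
  using G unfolding is_graph_def by auto

lemma nonemptyA: "v \<in> V \<Longrightarrow> half_edges E bd v \<noteq> {}"
  using G unfolding is_graph_def by auto

lemma Gsub: "v \<in> V \<Longrightarrow> complex_subspace (Gv v)"
  and Gsupp: "v \<in> V \<Longrightarrow> Gv v \<subseteq> supported_on (half_edges E bd v)"
  using VS unfolding is_vertex_space_def by auto

lemma fam_fin: "h \<in> H \<Longrightarrow> finite (fam h)"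
  unfolding fam_def using finA[OF vtV]
  by (rule_tac finite_subset[of _ "Pow (half_edges E bd (vt h))"]) auto

lemma fam_ne: "h \<in> H \<Longrightarrow> half_edges E bd (vt h) \<in> fam h"
  unfolding fam_def using inA splits_all[OF Gsupp[OF vtV]] by auto

lemma blk: assumes "h \<in> H"
  shows "h \<in> blk h" "blk h \<subseteq> half_edges E bd (vt h)" "splits (Gv (vt h)) (blk h)"
proof -
  show "h \<in> blk h" unfolding blk_def fam_def by auto
  show "blk h \<subseteq> half_edges E bd (vt h)" unfolding blk_def using fam_ne[OF assms] by auto
  show "splits (Gv (vt h)) (blk h)" unfolding blk_def
    using splits_Inter[OF fam_fin[OF assms]] fam_ne[OF assms] by (auto simp: fam_def)
qed

lemma blk_min: "h \<in> H \<Longrightarrow> X \<subseteq> half_edges E bd (vt h) \<Longrightarrow> splits (Gv (vt h)) X \<Longrightarrow> h \<in> X \<Longrightarrow> blk h \<subseteq> X"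
  unfolding blk_def fam_def by auto

lemma blk_H: "h \<in> H \<Longrightarrow> h' \<in> blk h \<Longrightarrow> h' \<in> H \<and> vt h' = vt h"
  using blk(2) A_H by blast

lemma blk_eq: assumes h: "h \<in> H" and h': "h' \<in> blk h" shows "blk h' = blk h"
proof -
  have h'H: "h' \<in> H" and v: "vt h' = vt h" using blk_H[OF h h'] by auto
  have 1: "blk h' \<subseteq> blk h" using blk_min[OF h'H] blk[OF h] h' v by auto
  have "h \<in> blk h'"
  proof (rule ccontr)
    assume nh: "h \<notin> blk h'"
    let ?Y = "half_edges E bd (vt h) - blk h'"
    have "splits (Gv (vt h)) ?Y"
      using splits_diff[OF Gsub[OF vtV[OF h]] Gsupp[OF vtV[OF h]]] blk(3)[OF h'H] v by simp
    then have "blk h \<subseteq> ?Y" using blk_min[OF h] nh inA[OF h] by auto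
    then show False using h' blk(1)[OF h'H] by auto
  qed
  then have "blk h \<subseteq> blk h'" using blk_min[OF h] blk[OF h'H] v by auto
  with 1 show ?thesis by auto
qed

lemma rep: assumes h: "h \<in> H"
  shows "rep h \<in> blk h" "rep h \<in> H" "vt (rep h) = vt h" "blk (rep h) = blk h"
proof -
  show r: "rep h \<in> blk h" unfolding rep_def using blk(1)[OF h] by (rule someI)
  show "rep h \<in> H" "vt (rep h) = vt h" using blk_H[OF h r] by auto
  show "blk (rep h) = blk h" using blk_eq[OF h r] .
qed

lemma node_eq: assumes "h \<in> H" "h' \<in> H" shows "node h = node h' \<longleftrightarrow> blk h = blk h'"
proof
  assume "node h = node h'"
  then have "rep h = rep h'" unfolding node_def
    using inj_on_to_nat_on[OF H_count] rep(2)[OF assms(1)] rep(2)[OF assms(2)]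
    by (auto dest: inj_onD)
  then show "blk h = blk h'" using rep(4) assms by metis
next
  assume "blk h = blk h'" then show "node h = node h'" unfolding node_def rep_def by simp
qed

lemma pi_node: "h \<in> H \<Longrightarrow> pi (node h) = vt h"
  unfolding pi_def node_def using from_nat_into_to_nat_on[OF H_count] rep by simp

lemma endpt_bdt: "endpt bdt b e = node (e, b)"
  unfolding endpt_def bdt_def by auto

lemma HE: "half_edges E bdt w = {h \<in> H. node h = w}"
  unfolding half_edges_def H_def using endpt_bdt by auto

lemma HE_node: assumes h: "h \<in> H" shows "half_edges E bdt (node h) = blk h"
proof -
  have "{h' \<in> H. node h' = node h} = blk h"
  proof (intro set_eqI iffI)
    fix x assume "x \<in> {h' \<in> H. node h' = node h}"
    then have xH: "x \<in> H" and "node x = node h" by auto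
    then have "blk x = blk h" using node_eq[OF xH h] by simp
    then show "x \<in> blk h" using blk(1)[OF xH] by simp
  next
    fix x assume x: "x \<in> blk h"
    then have "x \<in> H" using blk_H[OF h] by auto
    moreover have "node x = node h" using node_eq[OF \<open>x \<in> H\<close> h] blk_eq[OF h x] by simp
    ultimately show "x \<in> {h' \<in> H. node h' = node h}" by simp
  qed
  then show ?thesis using HE by simp
qed

end


context LS begin

lemma nodeVt: "h \<in> H \<Longrightarrow> node h \<in> Vt" unfolding Vt_def by auto

lemma graph: "is_graph Vt E bdt"
  unfolding is_graph_def
proof (intro conjI ballI)
  show "countable Vt" by (rule countableI_type)
  show "countable E" using G unfolding is_graph_def by auto
  fix e assume "e \<in> E"
  then have "(e, False) \<in> H" "(e, True) \<in> H" unfolding H_def by auto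
  then show "fst (bdt e) \<in> Vt" "snd (bdt e) \<in> Vt" unfolding bdt_def using nodeVt by auto
next
  fix w assume "w \<in> Vt"
  then obtain h where h: "h \<in> H" "w = node h" unfolding Vt_def by auto
  then have eq: "half_edges E bdt w = blk h" using HE_node by simp
  show "finite (half_edges E bdt w)" unfolding eq
    using blk(2)[OF h(1)] finA[OF vtV[OF h(1)]] finite_subset by blast
  show "half_edges E bdt w \<noteq> {}" unfolding eq using blk(1)[OF h(1)] by auto
qed

lemma bd_eq: "e \<in> E \<Longrightarrow> bd e = (pi (fst (bdt e)), pi (snd (bdt e)))"
proof -
  assume "e \<in> E"
  then have "(e, False) \<in> H" "(e, True) \<in> H" unfolding H_def by auto
  then show ?thesis unfolding bdt_def using pi_node by (simp add: vt_def endpt_def)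
qed

lemma piV: "w \<in> Vt \<Longrightarrow> pi w \<in> V"
  unfolding Vt_def using pi_node vtV by auto

lemma pi_img: "pi ` Vt = V"
proof
  show "pi ` Vt \<subseteq> V" using piV by auto
  show "V \<subseteq> pi ` Vt"
  proof
    fix v assume v: "v \<in> V"
    then obtain h where "h \<in> half_edges E bd v" using nonemptyA by blast
    then have "h \<in> H" "vt h = v" using A_H by auto
    then show "v \<in> pi ` Vt" using pi_node nodeVt by (metis image_eqI)
  qed
qed

lemma Gt_subspace: "w \<in> Vt \<Longrightarrow> complex_subspace (Gt w)"
  unfolding Gt_def using restr_subspace Gsub piV by auto

lemma Gt_vs: "w \<in> Vt \<Longrightarrow> is_vertex_space (half_edges E bdt w) (Gt w)"
  unfolding is_vertex_space_def using Gt_subspace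
  by (auto simp: Gt_def restr_space_def supported_on_def)

lemma Gt_sub: "Gt w \<subseteq> Gv (pi w)"
  unfolding Gt_def restr_space_def by auto

lemma indep_Gt:
  assumes "finite J" "\<forall>w\<in>J. f w \<in> Gt w" "(\<lambda>h. \<Sum>w\<in>J. f w h) = (\<lambda>_. 0)"
  shows "\<forall>w\<in>J. f w = (\<lambda>_. 0)"
proof (rule indep[OF assms(1) _ _ assms(3), of "\<lambda>w k. k \<in> H \<and> node k = w"])
  show "\<forall>i\<in>J. \<forall>k. f i k \<noteq> 0 \<longrightarrow> k \<in> H \<and> node k = i"
    using assms(2) unfolding Gt_def restr_space_def HE by auto
qed auto

lemma Wv: "v \<in> V \<Longrightarrow> {w\<in>Vt. pi w = v} = node ` half_edges E bd v"
proof (intro set_eqI iffI)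
  fix w assume "w \<in> {w\<in>Vt. pi w = v}"
  then obtain h where h: "h \<in> H" "w = node h" "pi w = v" unfolding Vt_def by auto
  then have "vt h = v" using pi_node by simp
  then show "w \<in> node ` half_edges E bd v" using h inA[OF h(1)] by (simp add: image_eqI)
next
  fix w assume "w \<in> node ` half_edges E bd v"
  then obtain h where h: "h \<in> half_edges E bd v" "w = node h" by auto
  then have "h \<in> H" "vt h = v" using A_H by auto
  then show "w \<in> {w\<in>Vt. pi w = v}" using h pi_node nodeVt by auto
qed

lemma sum_v: assumes v: "v \<in> V" shows "Gv v = subspace_sum {w\<in>Vt. pi w = v} Gt"
proof
  show "Gv v \<subseteq> subspace_sum {w\<in>Vt. pi w = v} Gt"
  proof
    fix F assume F: "F \<in> Gv v"
    let ?W = "node ` half_edges E bd v"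
    define f where "f w = (\<lambda>k. if k \<in> half_edges E bdt w then F k else 0)" for w
    have fW: "\<forall>w\<in>?W. f w \<in> Gt w"
    proof
      fix w assume "w \<in> ?W"
      then obtain h where h: "h \<in> half_edges E bd v" "w = node h" by auto
      then have hH: "h \<in> H" and vh: "vt h = v" using A_H by auto
      have pw: "pi w = v" using h pi_node hH vh by simp
      have "f w \<in> Gv v" unfolding f_def HE_node[OF hH] h(2)
        using blk(3)[OF hH] F vh unfolding splits_def by auto
      then show "f w \<in> Gt w" unfolding Gt_def restr_space_def pw by (auto simp: f_def)
    qed
    have Fsum: "F = (\<lambda>k. \<Sum>w\<in>?W. f w k)"
    proof
      fix k show "F k = (\<Sum>w\<in>?W. f w k)"
      proof (cases "k \<in> half_edges E bd v")
        case True
        then have kH: "k \<in> H" using A_H by auto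
        have "(\<Sum>w\<in>?W. f w k) = (\<Sum>w\<in>?W. if node k = w then F k else 0)"
          by (rule sum.cong) (auto simp: f_def HE kH)
        also have "\<dots> = F k" using True finA[OF v] by simp
        finally show ?thesis by simp
      next
        case False
        then have "F k = 0" using Gsupp[OF v] F unfolding supported_on_def by blast
        then show ?thesis by (simp add: f_def sum.neutral)
      qed
    qed
    show "F \<in> subspace_sum {w\<in>Vt. pi w = v} Gt"
      unfolding subspace_sum_def Wv[OF v] using fW finA[OF v] Fsum
      by (intro CollectI exI[of _ ?W] exI[of _ f]) auto
  qed
next
  show "subspace_sum {w\<in>Vt. pi w = v} Gt \<subseteq> Gv v"
  proof
    fix x assume "x \<in> subspace_sum {w\<in>Vt. pi w = v} Gt"
    then obtain J f where J: "finite J" "J \<subseteq> {w\<in>Vt. pi w = v}" "\<forall>i\<in>J. f i \<in> Gt i"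
      "x = (\<lambda>h. \<Sum>i\<in>J. f i h)" unfolding subspace_sum_def by blast
    have "\<forall>i\<in>J. f i \<in> Gv v" using J(2,3) Gt_sub by blast
    then show "x \<in> Gv v" using sub_sum[OF Gsub[OF v] J(1)] J(4) by simp
  qed
qed

lemma total: "subspace_sum V Gv = subspace_sum Vt Gt"
proof
  have sub: "complex_subspace (subspace_sum Vt Gt)"
    by (intro subspace_sum_subspace ballI Gt_subspace)
  show "subspace_sum V Gv \<subseteq> subspace_sum Vt Gt"
  proof
    fix x assume "x \<in> subspace_sum V Gv"
    then obtain J f where J: "finite J" "J \<subseteq> V" "\<forall>i\<in>J. f i \<in> Gv i"
      "x = (\<lambda>h. \<Sum>i\<in>J. f i h)" unfolding subspace_sum_def by blast
    have "\<forall>i\<in>J. f i \<in> subspace_sum Vt Gt"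
    proof
      fix i assume i: "i \<in> J"
      then have iV: "i \<in> V" using J(2) by blast
      have "f i \<in> Gv i" using J(3) i by blast
      moreover have "Gv i = subspace_sum {w\<in>Vt. pi w = i} Gt" by (rule sum_v[OF iV])
      ultimately have "f i \<in> subspace_sum {w\<in>Vt. pi w = i} Gt" by simp
      moreover have "subspace_sum {w\<in>Vt. pi w = i} Gt \<subseteq> subspace_sum Vt Gt"
        by (rule subspace_sum_mono) blast
      ultimately show "f i \<in> subspace_sum Vt Gt" by blast
    qed
    then show "x \<in> subspace_sum Vt Gt" using sub_sum[OF sub J(1)] J(4) by simp
  qed
next
  have sub: "complex_subspace (subspace_sum V Gv)"
    by (intro subspace_sum_subspace ballI Gsub)
  show "subspace_sum Vt Gt \<subseteq> subspace_sum V Gv"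
  proof
    fix x assume "x \<in> subspace_sum Vt Gt"
    then obtain J f where J: "finite J" "J \<subseteq> Vt" "\<forall>i\<in>J. f i \<in> Gt i"
      "x = (\<lambda>h. \<Sum>i\<in>J. f i h)" unfolding subspace_sum_def by blast
    have "\<forall>i\<in>J. f i \<in> subspace_sum V Gv"
    proof
      fix i assume i: "i \<in> J"
      then have "f i \<in> Gv (pi i)" using J(3) Gt_sub by blast
      moreover have "pi i \<in> V" using piV J(2) i by blast
      ultimately show "f i \<in> subspace_sum V Gv" by (rule subspace_sum_single[rotated])
    qed
    then show "x \<in> subspace_sum V Gv" using sub_sum[OF sub J(1)] J(4) by simp
  qed
qed

end


context LS begin

lemma irred: assumes w: "w \<in> Vt" shows "irreducible_vs (half_edges E bdt w) (Gt w)"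
  unfolding irreducible_vs_def
proof (intro allI impI)
  fix E1 E2
  assume a: "half_edges E bdt w = E1 \<union> E2 \<and> E1 \<inter> E2 = {} \<and>
    is_direct_sum (Gt w) (UNIV :: bool set) (\<lambda>b. if b then restr_space (Gt w) E1 else restr_space (Gt w) E2)"
  obtain h where h: "h \<in> H" "w = node h" using w unfolding Vt_def by auto
  define v where "v = vt h"
  have pw: "pi w = v" using pi_node h v_def by simp
  have vV: "v \<in> V" using vtV h v_def by simp
  have HEw: "half_edges E bdt w = blk h" using HE_node h by simp
  have a1: "half_edges E bdt w = E1 \<union> E2" using a by (rule conjunct1)
  have D: "E1 \<inter> E2 = {}" using a by (simp only: conj_assoc)
  have U: "blk h = E1 \<union> E2" using a1 HEw by simp
  have a3: "is_direct_sum (Gt w) (UNIV :: bool set) (\<lambda>b. if b then restr_space (Gt w) E1 else restr_space (Gt w) E2)"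
    using a by (simp only: conj_assoc)
  have DS: "Gt w = subspace_sum (UNIV :: bool set) (\<lambda>b. if b then restr_space (Gt w) E1 else restr_space (Gt w) E2)"
    using a3 unfolding is_direct_sum_def by (rule conjunct1)
  have GtSub: "complex_subspace (restr_space (Gt w) E1)"
    by (rule restr_subspace[OF Gt_subspace[OF w]])
  have bsplit: "splits (Gv v) (blk h)" using blk(3)[OF h(1)] v_def by simp
  have s1: "splits (Gv v) E1"
    unfolding splits_def
  proof
    fix F assume F: "F \<in> Gv v"
    define F' where "F' = (\<lambda>k. if k \<in> blk h then F k else 0)"
    have "F' \<in> Gv v" using bspec[OF bsplit[unfolded splits_def] F] unfolding F'_def by simp
    then have "F' \<in> Gt w" unfolding Gt_def restr_space_def pw HEw by (simp add: F'_def)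
    then have "F' \<in> subspace_sum (UNIV :: bool set) (\<lambda>b. if b then restr_space (Gt w) E1 else restr_space (Gt w) E2)"
      using DS by simp
    then obtain J f where J: "finite J" "\<forall>i\<in>J. f i \<in> (if i then restr_space (Gt w) E1 else restr_space (Gt w) E2)"
      "F' = (\<lambda>h. \<Sum>i\<in>J. f i h)"
      unfolding subspace_sum_def by blast
    define g where "g i = (\<lambda>k. if k \<in> E1 then f i k else 0)" for i
    have gi: "\<forall>i\<in>J. g i \<in> restr_space (Gt w) E1"
    proof
      fix i assume i: "i \<in> J"
      show "g i \<in> restr_space (Gt w) E1"
      proof (cases i)
        case True
        then have fi: "f i \<in> restr_space (Gt w) E1" using J(2) i by auto
        then have "g i = f i" unfolding g_def restr_space_def by auto
        then show ?thesis using fi by simp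
      next
        case False
        then have fi: "f i \<in> restr_space (Gt w) E2" using J(2) i by auto
        then have z: "\<forall>k. k \<notin> E2 \<longrightarrow> f i k = 0" unfolding restr_space_def by blast
        have "g i = (\<lambda>_. 0)"
        proof
          fix k
          show "g i k = 0"
          proof (cases "k \<in> E1")
            case True
            then have "k \<notin> E2" using D by blast
            then have "f i k = 0" using z by blast
            then show ?thesis using True by (simp add: g_def)
          qed (simp add: g_def)
        qed
        then show ?thesis using cs_zero[OF GtSub] by simp
      qed
    qed
    have "(\<lambda>k. \<Sum>i\<in>J. g i k) \<in> restr_space (Gt w) E1" by (rule sub_sum[OF GtSub J(1) gi])
    moreover have "(\<lambda>k. \<Sum>i\<in>J. g i k) = (\<lambda>k. if k \<in> E1 then F k else 0)"
    proof
      fix k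
      show "(\<Sum>i\<in>J. g i k) = (if k \<in> E1 then F k else 0)"
      proof (cases "k \<in> E1")
        case True
        then have "(\<Sum>i\<in>J. g i k) = F' k" using J(3) by (simp add: g_def)
        then show ?thesis using True U by (simp add: F'_def)
      qed (simp add: g_def)
    qed
    ultimately show "(\<lambda>k. if k \<in> E1 then F k else 0) \<in> Gv v"
      using Gt_sub[of w] pw unfolding restr_space_def by auto
  qed
  have bA: "blk h \<subseteq> half_edges E bd v" using blk(2)[OF h(1)] v_def by simp
  have s2: "splits (Gv v) E2"
  proof -
    have "splits (Gv v) (half_edges E bd v - E1)" using splits_diff[OF Gsub[OF vV] Gsupp[OF vV] s1] .
    then have "splits (Gv v) (blk h \<inter> (half_edges E bd v - E1))" using splits_Int bsplit by blast
    moreover have "blk h \<inter> (half_edges E bd v - E1) = E2" using U D bA by auto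
    ultimately show ?thesis by simp
  qed
  have hb: "h \<in> blk h" using blk(1)[OF h(1)] .
  show "E1 = {} \<or> E2 = {}"
  proof (cases "h \<in> E1")
    case True
    then have "blk h \<subseteq> E1" using blk_min[OF h(1)] s1 U bA v_def by auto
    then show ?thesis using U D by auto
  next
    case False
    then have "h \<in> E2" using hb U by auto
    then have "blk h \<subseteq> E2" using blk_min[OF h(1)] s2 U bA v_def by auto
    then show ?thesis using U D by auto
  qed
qed

end

theorem lemma2p5:
  fixes V :: "'v set" and E :: "'e set" and bd :: "'e \<Rightarrow> 'v \<times> 'v"
    and Gv :: "'v \<Rightarrow> ('e \<times> bool \<Rightarrow> complex) set"
  assumes "is_graph V E bd"
    and "\<forall>v\<in>V. is_vertex_space (half_edges E bd v) (Gv v)"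
  shows "\<exists>(Vt :: nat set) (bdt :: 'e \<Rightarrow> nat \<times> nat) (\<pi> :: nat \<Rightarrow> 'v)
            (Gt :: nat \<Rightarrow> ('e \<times> bool \<Rightarrow> complex) set).
           is_graph Vt E bdt
         \<and> (\<forall>e\<in>E. bd e = (\<pi> (fst (bdt e)), \<pi> (snd (bdt e))))
         \<and> \<pi> ` Vt = V
         \<and> (\<forall>w\<in>Vt. is_vertex_space (half_edges E bdt w) (Gt w))
         \<and> is_direct_sum (subspace_sum V Gv) Vt Gt
         \<and> (\<forall>v\<in>V. is_direct_sum (Gv v) {w\<in>Vt. \<pi> w = v} Gt)
         \<and> (\<forall>w\<in>Vt. irreducible_vs (half_edges E bdt w) (Gt w))"
proof -
  interpret L: LS V E bd Gv using assms by unfold_locales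
  have ind: "\<forall>J f. finite J \<and> J \<subseteq> I \<and> (\<forall>i\<in>J. f i \<in> L.Gt i) \<and> (\<lambda>h. \<Sum>i\<in>J. f i h) = (\<lambda>_. 0)
             \<longrightarrow> (\<forall>i\<in>J. f i = (\<lambda>_. 0))" for I
  proof (intro allI impI)
    fix J f assume "finite J \<and> J \<subseteq> I \<and> (\<forall>i\<in>J. f i \<in> L.Gt i) \<and> (\<lambda>h. \<Sum>i\<in>J. f i h) = (\<lambda>_. 0)"
    then show "\<forall>i\<in>J. f i = (\<lambda>_. 0)" using L.indep_Gt[of J f] by simp
  qed
  have d1: "is_direct_sum (subspace_sum V Gv) L.Vt L.Gt"
    unfolding is_direct_sum_def using L.total ind by simp
  have d2: "\<forall>v\<in>V. is_direct_sum (Gv v) {w\<in>L.Vt. L.pi w = v} L.Gt"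
    unfolding is_direct_sum_def using L.sum_v ind by simp
  show ?thesis
    apply (rule exI[of _ L.Vt], rule exI[of _ L.bdt], rule exI[of _ L.pi], rule exI[of _ L.Gt])
    apply (intro conjI)
    using L.graph apply simp
    using L.bd_eq apply simp
    using L.pi_img apply simp
    using L.Gt_vs apply simp
    using d1 apply simp
    using d2 apply simp
    using L.irred apply simp
    done
qed


end
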